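(* Let $r\ge 1$ be an integer. The order of a $[1,r;4]$-mixed cage is $2(r+2)$. Moreover, a mixed graph $H$ is a $[1,r;4]$-mixed cage if and only if it is obtained from the complete bipartite graph $K_{r+2,r+2}$ by choosing a $2$-factor $F$ of $K_{r+2,r+2}$, orienting every cycle of $F$ as a directed cycle (these become the arcs of $H$), and keeping all remaining edges of $K_{r+2,r+2}$ as undirected edges.
   Context: A mixed graph is a finite simple graph that may contain both edges and arcs. A $[z,r;g]$-mixed graph is a mixed graph in which every vertex is the tail of exactly $z$ arcs, the head of exactly $z$ arcs, and is incident with exactly $r$ edges, and whose girth is $g$. Walks traverse edges in either direction and arcs only in their direction; a cycle is a closed walk with no repeated vertices (other than start = end) and no repeated edge or arc; the girth is the length of a shortest cycle. A $[z,r;g]$-mixed cage is a $[z,r;g]$-mixed graph of minimum order. *)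

theory Defs
  imports Main
begin

record 'a mixgraph =
  verts :: "'a set"
  edges :: "'a set set"
  arcs  :: "('a \<times> 'a) set"

definition mixed_graph :: "'a mixgraph \<Rightarrow> bool" where
  "mixed_graph G \<longleftrightarrow>
     finite (verts G) \<and>
     (\<forall>e\<in>edges G. \<exists>u v. u \<noteq> v \<and> e = {u, v} \<and> u \<in> verts G \<and> v \<in> verts G) \<and>
     (\<forall>(u, v)\<in>arcs G. u \<noteq> v \<and> u \<in> verts G \<and> v \<in> verts G) \<and>
     (\<forall>(u, v)\<in>arcs G. {u, v} \<notin> edges G)"

definition link_step :: "'a mixgraph \<Rightarrow> 'a \<Rightarrow> ('a set + ('a \<times> 'a)) \<Rightarrow> 'a \<Rightarrow> bool" where
  "link_step G a l b \<longleftrightarrow>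
     (case l of Inl e \<Rightarrow> e \<in> edges G \<and> e = {a, b} \<and> a \<noteq> b
              | Inr p \<Rightarrow> p \<in> arcs G \<and> p = (a, b))"

definition is_cycle :: "'a mixgraph \<Rightarrow> 'a list \<Rightarrow> ('a set + ('a \<times> 'a)) list \<Rightarrow> bool" where
  "is_cycle G xs ls \<longleftrightarrow>
     length ls \<ge> 1 \<and> length xs = length ls + 1 \<and>
     hd xs = last xs \<and> distinct (butlast xs) \<and> distinct ls \<and>
     set xs \<subseteq> verts G \<and>
     (\<forall>i < length ls. link_step G (xs ! i) (ls ! i) (xs ! Suc i))"

definition has_cycle_of_length :: "'a mixgraph \<Rightarrow> nat \<Rightarrow> bool" where
  "has_cycle_of_length G k \<longleftrightarrow> (\<exists>xs ls. is_cycle G xs ls \<and> length ls = k)"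

definition girth_is :: "'a mixgraph \<Rightarrow> nat \<Rightarrow> bool" where
  "girth_is G g \<longleftrightarrow> has_cycle_of_length G g \<and> (\<forall>k < g. \<not> has_cycle_of_length G k)"

definition mixed_zrg :: "'a mixgraph \<Rightarrow> nat \<Rightarrow> nat \<Rightarrow> nat \<Rightarrow> bool" where
  "mixed_zrg G z r g \<longleftrightarrow>
     mixed_graph G \<and>
     (\<forall>v\<in>verts G. card {w. (v, w) \<in> arcs G} = z \<and>
                  card {w. (w, v) \<in> arcs G} = z \<and>
                  card {e\<in>edges G. v \<in> e} = r) \<and>
     girth_is G g"

text \<open>Minimum order is taken over all mixed graphs; every finite mixed graph is isomorphic
  to one on natural-number vertices, so it suffices to compare with those.\<close>
definition mixed_cage :: "'a mixgraph \<Rightarrow> nat \<Rightarrow> nat \<Rightarrow> nat \<Rightarrow> bool" where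
  "mixed_cage H z r g \<longleftrightarrow>
     mixed_zrg H z r g \<and>
     (\<forall>G :: nat mixgraph. mixed_zrg G z r g \<longrightarrow> card (verts H) \<le> card (verts G))"

text \<open>H arises from K_{n,n} (n = r+2) on its own vertex set with parts X, Y:
  F is a 2-factor of K_{X,Y}, the arcs orient every cycle of F as a directed cycle
  (each F-edge gets exactly one direction, every vertex has in- and out-degree 1),
  and the remaining edges of K_{X,Y} are the undirected edges.\<close>
definition from_Knn_2factor :: "'a mixgraph \<Rightarrow> nat \<Rightarrow> bool" where
  "from_Knn_2factor H n \<longleftrightarrow>
     (\<exists>X Y F.
        verts H = X \<union> Y \<and> X \<inter> Y = {} \<and> finite X \<and> finite Y \<and>
        card X = n \<and> card Y = n \<and>
        F \<subseteq> {{x, y} | x y. x \<in> X \<and> y \<in> Y} \<and>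
        (\<forall>v\<in>X \<union> Y. card {e\<in>F. v \<in> e} = 2) \<and>
        arcs H \<subseteq> {(u, v). {u, v} \<in> F} \<and>
        (\<forall>u v. {u, v} \<in> F \<longrightarrow> ((u, v) \<in> arcs H \<longleftrightarrow> (v, u) \<notin> arcs H)) \<and>
        (\<forall>v\<in>X \<union> Y. card {w. (v, w) \<in> arcs H} = 1 \<and> card {w. (w, v) \<in> arcs H} = 1) \<and>
        edges H = {{x, y} | x y. x \<in> X \<and> y \<in> Y} - F)"

end

theory Submission
  imports Defs
begin


definition st :: "'a mixgraph \<Rightarrow> 'a \<Rightarrow> 'a \<Rightarrow> bool" where
  "st G a b \<longleftrightarrow> a \<noteq> b \<and> ({a,b} \<in> edges G \<or> (a,b) \<in> arcs G)"

lemma st_link: "st G a b \<Longrightarrow> \<exists>l. link_step G a l b"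
proof -
  assume "st G a b"
  then have "link_step G a (Inl {a,b}) b \<or> link_step G a (Inr (a,b)) b"
    unfolding st_def link_step_def by auto
  then show ?thesis by blast
qed

lemma link_ends: "link_step G a l b \<Longrightarrow> link_step G c l d \<Longrightarrow> {a,b} = {c,d}"
  by (auto simp: link_step_def split: sum.splits)

lemma cyc2:
  assumes "link_step G a l1 b" "link_step G b l2 a" "l1 \<noteq> l2" "a \<noteq> b" "a \<in> verts G" "b \<in> verts G"
  shows "has_cycle_of_length G 2"
proof -
  have "is_cycle G [a,b,a] [l1,l2]"
    unfolding is_cycle_def using assms by (auto simp: less_Suc_eq numeral_2_eq_2)
  then show ?thesis unfolding has_cycle_of_length_def by fastforce
qed

lemma cyc3:
  assumes "st G a b" "st G b c" "st G c a" "a \<noteq> c" "a \<in> verts G" "b \<in> verts G" "c \<in> verts G"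
  shows "has_cycle_of_length G 3"
proof -
  obtain l1 where l1: "link_step G a l1 b" using st_link[OF assms(1)] by blast
  obtain l2 where l2: "link_step G b l2 c" using st_link[OF assms(2)] by blast
  obtain l3 where l3: "link_step G c l3 a" using st_link[OF assms(3)] by blast
  note l = l1 l2 l3
  have d: "a \<noteq> b" "b \<noteq> c" using assms by (auto simp: st_def)
  have "l1 \<noteq> l2" using link_ends[OF l(1)] l(2) d assms(4) by (auto simp: doubleton_eq_iff)
  moreover have "l1 \<noteq> l3" using link_ends[OF l(1)] l(3) d assms(4) by (auto simp: doubleton_eq_iff)
  moreover have "l2 \<noteq> l3" using link_ends[OF l(2)] l(3) d assms(4) by (auto simp: doubleton_eq_iff)
  ultimately have "is_cycle G [a,b,c,a] [l1,l2,l3]"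
    unfolding is_cycle_def using assms l d by (auto simp: less_Suc_eq numeral_3_eq_3)
  then show ?thesis unfolding has_cycle_of_length_def by fastforce
qed

lemma cyc4:
  assumes "st G a b" "st G b c" "st G c d" "st G d a" "distinct [a,b,c,d]"
    "a \<in> verts G" "b \<in> verts G" "c \<in> verts G" "d \<in> verts G"
  shows "has_cycle_of_length G 4"
proof -
  obtain l1 where l1: "link_step G a l1 b" using st_link[OF assms(1)] by blast
  obtain l2 where l2: "link_step G b l2 c" using st_link[OF assms(2)] by blast
  obtain l3 where l3: "link_step G c l3 d" using st_link[OF assms(3)] by blast
  obtain l4 where l4: "link_step G d l4 a" using st_link[OF assms(4)] by blast
  note l = l1 l2 l3 l4
  have dd: "a \<noteq> b" "a \<noteq> c" "a \<noteq> d" "b \<noteq> c" "b \<noteq> d" "c \<noteq> d" using assms(5) by auto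
  have "l1 \<noteq> l2" using link_ends[OF l(1)] l(2) dd by (auto simp: doubleton_eq_iff)
  moreover have "l1 \<noteq> l3" using link_ends[OF l(1)] l(3) dd by (auto simp: doubleton_eq_iff)
  moreover have "l1 \<noteq> l4" using link_ends[OF l(1)] l(4) dd by (auto simp: doubleton_eq_iff)
  moreover have "l2 \<noteq> l3" using link_ends[OF l(2)] l(3) dd by (auto simp: doubleton_eq_iff)
  moreover have "l2 \<noteq> l4" using link_ends[OF l(2)] l(4) dd by (auto simp: doubleton_eq_iff)
  moreover have "l3 \<noteq> l4" using link_ends[OF l(3)] l(4) dd by (auto simp: doubleton_eq_iff)
  ultimately have "distinct [l1,l2,l3,l4]" by simp
  moreover have "\<forall>i<4. link_step G ([a,b,c,d,a] ! i) ([l1,l2,l3,l4] ! i) ([a,b,c,d,a] ! Suc i)"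
  proof (intro allI impI)
    fix i :: nat assume "i < 4"
    then have "i = 0 \<or> i = 1 \<or> i = 2 \<or> i = 3" by auto
    then show "link_step G ([a,b,c,d,a] ! i) ([l1,l2,l3,l4] ! i) ([a,b,c,d,a] ! Suc i)"
      using l by (elim disjE) (simp_all add: numeral_eq_Suc)
  qed
  ultimately have "is_cycle G [a,b,c,d,a] [l1,l2,l3,l4]"
    unfolding is_cycle_def using assms(5-9) by simp
  then show ?thesis unfolding has_cycle_of_length_def by fastforce
qed

lemma mg_link_neq: "mixed_graph G \<Longrightarrow> link_step G a l b \<Longrightarrow> a \<noteq> b"
  by (auto simp: mixed_graph_def link_step_def split: sum.splits)

definition adj :: "'a mixgraph \<Rightarrow> 'a \<Rightarrow> 'a \<Rightarrow> bool" where
  "adj G x y \<longleftrightarrow> st G x y \<or> st G y x"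

definition nbh :: "'a mixgraph \<Rightarrow> 'a \<Rightarrow> 'a set" where
  "nbh G v = {x. adj G v x}"

locale g4 =
  fixes G :: "'a mixgraph" and r :: nat
  assumes zrg: "mixed_zrg G 1 r 4"
begin

lemma mg: "mixed_graph G" using zrg by (simp add: mixed_zrg_def)
lemma fin: "finite (verts G)" using mg by (simp add: mixed_graph_def)
lemma outc: "v \<in> verts G \<Longrightarrow> card {w. (v, w) \<in> arcs G} = 1" using zrg by (simp add: mixed_zrg_def)
lemma inc: "v \<in> verts G \<Longrightarrow> card {w. (w, v) \<in> arcs G} = 1" using zrg by (simp add: mixed_zrg_def)
lemma edc: "v \<in> verts G \<Longrightarrow> card {e\<in>edges G. v \<in> e} = r" using zrg by (simp add: mixed_zrg_def)
lemma no2: "\<not> has_cycle_of_length G 2" using zrg by (simp add: mixed_zrg_def girth_is_def)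
lemma no3: "\<not> has_cycle_of_length G 3" using zrg by (simp add: mixed_zrg_def girth_is_def)

lemma arc_v: "(a,b) \<in> arcs G \<Longrightarrow> a \<noteq> b \<and> a \<in> verts G \<and> b \<in> verts G"
  using mg by (auto simp: mixed_graph_def)
lemma arc_ne: "(a,b) \<in> arcs G \<Longrightarrow> {a,b} \<notin> edges G"
  using mg by (auto simp: mixed_graph_def)
lemma edge_v: "{a,b} \<in> edges G \<Longrightarrow> a \<in> verts G \<and> b \<in> verts G"
  using mg unfolding mixed_graph_def by (metis doubleton_eq_iff)

lemma edge_ne: "{a,b} \<in> edges G \<Longrightarrow> a \<noteq> b"
proof -
  assume "{a,b} \<in> edges G"
  then obtain u v where "u \<noteq> v" "{a,b} = {u,v}" using mg unfolding mixed_graph_def by blast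
  then show "a \<noteq> b" by (auto simp: doubleton_eq_iff)
qed

lemma st_v: "st G a b \<Longrightarrow> a \<in> verts G \<and> b \<in> verts G"
  using arc_v edge_v by (auto simp: st_def)

lemma out_unique: assumes "(u,a) \<in> arcs G" "(u,b) \<in> arcs G" shows "a = b"
proof -
  have "card {w. (u, w) \<in> arcs G} = 1" using outc arc_v assms by blast
  then obtain x where "{w. (u, w) \<in> arcs G} = {x}" by (auto simp: card_1_singleton_iff)
  then show ?thesis using assms by (simp add: set_eq_iff)
qed

lemma in_unique: assumes "(a,u) \<in> arcs G" "(b,u) \<in> arcs G" shows "a = b"
proof -
  have "card {w. (w, u) \<in> arcs G} = 1" using inc arc_v assms by blast
  then obtain x where "{w. (w, u) \<in> arcs G} = {x}" by (auto simp: card_1_singleton_iff)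
  then show ?thesis using assms by (simp add: set_eq_iff)
qed

lemma out_ex: assumes "v \<in> verts G" obtains a where "(v,a) \<in> arcs G"
proof -
  have "card {w. (v, w) \<in> arcs G} = 1" using outc assms by blast
  then obtain x where "{w. (v, w) \<in> arcs G} = {x}" by (auto simp: card_1_singleton_iff)
  then show ?thesis using that by blast
qed

lemma in_ex: assumes "v \<in> verts G" obtains a where "(a,v) \<in> arcs G"
proof -
  have "card {w. (w, v) \<in> arcs G} = 1" using inc assms by blast
  then obtain x where "{w. (w, v) \<in> arcs G} = {x}" by (auto simp: card_1_singleton_iff)
  then show ?thesis using that by blast
qed

lemma no_digon: assumes "(a,b) \<in> arcs G" shows "(b,a) \<notin> arcs G"
proof
  assume "(b,a) \<in> arcs G"
  then have "has_cycle_of_length G 2"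
    using cyc2[of G a "Inr (a,b)" b "Inr (b,a)"] assms arc_v[OF assms]
    by (auto simp: link_step_def)
  then show False using no2 by simp
qed

lemma no_tri: assumes "st G a b" "st G b c" "st G c a" "a \<noteq> c" shows False
  using cyc3[OF assms] st_v assms no3 by blast

lemma adj_irrefl: "\<not> adj G x x" by (simp add: adj_def st_def)

lemma indep_aux:
  assumes "adj G w x" "adj G w y" "adj G x y" "x \<noteq> y"
  shows False
proof -
  have d: "w \<noteq> x" "w \<noteq> y" using assms adj_irrefl by metis+
  show False
    using assms d no_tri out_unique in_unique unfolding adj_def st_def
    by (smt (verit) insert_commute)
qed


lemma indep: "x \<in> nbh G w \<Longrightarrow> y \<in> nbh G w \<Longrightarrow> x \<noteq> y \<Longrightarrow> \<not> adj G x y"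
  using indep_aux by (auto simp: nbh_def)

lemma adj_sym: "adj G x y \<Longrightarrow> adj G y x" by (auto simp: adj_def)

lemma nbh_sub: "nbh G v \<subseteq> verts G" using st_v by (auto simp: nbh_def adj_def)

lemma nbh_card: assumes v: "v \<in> verts G" shows "card (nbh G v) = r + 2"
proof -
  obtain a where a: "(v,a) \<in> arcs G" using out_ex v by blast
  obtain b where b: "(b,v) \<in> arcs G" using in_ex v by blast
  define E where "E = {x. {v,x} \<in> edges G}"
  have eq: "nbh G v = insert a (insert b E)"
  proof (rule set_eqI)
    fix x show "x \<in> nbh G v \<longleftrightarrow> x \<in> insert a (insert b E)"
    proof
      assume "x \<in> nbh G v"
      then have "st G v x \<or> st G x v" by (simp add: nbh_def adj_def)
      then have "{v,x} \<in> edges G \<or> (v,x) \<in> arcs G \<or> (x,v) \<in> arcs G"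
        by (auto simp: st_def insert_commute)
      then show "x \<in> insert a (insert b E)"
        using out_unique[OF a, of x] in_unique[OF b, of x] unfolding E_def by blast
    next
      assume "x \<in> insert a (insert b E)"
      moreover have "v \<noteq> x" if "x \<in> E"
        using that edge_ne unfolding E_def by blast
      ultimately show "x \<in> nbh G v"
        using a b arc_v by (auto simp: nbh_def adj_def st_def E_def)
    qed
  qed
  have "E \<subseteq> verts G" using edge_v by (auto simp: E_def)
  then have finE: "finite E" using fin finite_subset by blast
  have aE: "a \<notin> E" using arc_ne[OF a] by (simp add: E_def)
  have bE: "b \<notin> E" using arc_ne[OF b] by (simp add: E_def insert_commute)
  have ab: "a \<noteq> b" using no_digon[OF a] b by blast
  have img: "(\<lambda>x. {v,x}) ` E = {e\<in>edges G. v \<in> e}"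
  proof (rule set_eqI)
    fix e show "e \<in> (\<lambda>x. {v,x}) ` E \<longleftrightarrow> e \<in> {e\<in>edges G. v \<in> e}"
    proof
      assume "e \<in> {e\<in>edges G. v \<in> e}"
      then have "e \<in> edges G" "v \<in> e" by auto
      then obtain p q where "e = {p,q}" using mg unfolding mixed_graph_def by blast
      then show "e \<in> (\<lambda>x. {v,x}) ` E"
        using \<open>e \<in> edges G\<close> \<open>v \<in> e\<close> unfolding E_def by (auto simp: insert_commute)
    qed (auto simp: E_def)
  qed
  have "inj_on (\<lambda>x. {v,x}) E" by (auto simp: inj_on_def doubleton_eq_iff)
  then have "card E = r" using card_image img edc[OF v] by metis
  then show ?thesis using eq finE aE bE ab by simp
qed

lemma verts_ne: "verts G \<noteq> {}"
proof -
  have "has_cycle_of_length G 4" using zrg by (simp add: mixed_zrg_def girth_is_def)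
  then obtain xs ls where "is_cycle G xs ls" "length ls = 4" by (auto simp: has_cycle_of_length_def)
  then have "set xs \<subseteq> verts G" "xs \<noteq> []" by (auto simp: is_cycle_def)
  then show ?thesis by auto
qed

lemma lower: "2 * (r + 2) \<le> card (verts G)"
proof -
  obtain v where v: "v \<in> verts G" using verts_ne by blast
  have "card (nbh G v) = r + 2" using nbh_card v by blast
  then have "nbh G v \<noteq> {}" by auto
  then obtain u where u: "u \<in> nbh G v" by blast
  have uv: "u \<in> verts G" using u nbh_sub by blast
  have disj: "nbh G u \<inter> nbh G v = {}"
  proof (rule ccontr)
    assume "nbh G u \<inter> nbh G v \<noteq> {}"
    then obtain x where x: "x \<in> nbh G u" "x \<in> nbh G v" by blast
    have "x \<noteq> u" using x adj_irrefl by (auto simp: nbh_def)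
    then show False using indep[OF u x(2)] x(1) by (auto simp: nbh_def)
  qed
  have "card (nbh G u \<union> nbh G v) = 2 * (r + 2)"
    using card_Un_disjoint[OF _ _ disj] nbh_card[OF v] nbh_card[OF uv]
      finite_subset[OF nbh_sub fin] by simp
  moreover have "card (nbh G u \<union> nbh G v) \<le> card (verts G)"
    using nbh_sub fin by (simp add: card_mono)
  ultimately show ?thesis by simp
qed


lemma adj_arc: "(x,y) \<in> arcs G \<Longrightarrow> adj G x y"
  using arc_v by (auto simp: adj_def st_def)

lemma structure_thm:
  assumes cv: "card (verts G) = 2 * (r + 2)"
  shows "from_Knn_2factor G (r + 2)"
proof -
  obtain v where v: "v \<in> verts G" using verts_ne by blast
  have "card (nbh G v) = r + 2" using nbh_card v by blast
  then have "nbh G v \<noteq> {}" by auto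
  then obtain u where u: "u \<in> nbh G v" by blast
  have uv: "u \<in> verts G" using u nbh_sub by blast
  define X where "X = nbh G u"
  define Y where "Y = nbh G v"
  have disj: "X \<inter> Y = {}"
  proof (rule ccontr)
    assume "X \<inter> Y \<noteq> {}"
    then obtain x where x: "x \<in> nbh G u" "x \<in> nbh G v" unfolding X_def Y_def by blast
    have "x \<noteq> u" using x adj_irrefl by (auto simp: nbh_def)
    then show False using indep[OF u x(2)] x(1) by (auto simp: nbh_def)
  qed
  have finX: "finite X" and finY: "finite Y" using finite_subset[OF nbh_sub fin] X_def Y_def by auto
  have cX: "card X = r + 2" and cY: "card Y = r + 2" using nbh_card v uv X_def Y_def by auto
  have "card (X \<union> Y) = card (verts G)" using card_Un_disjoint[OF finX finY disj] cX cY cv by simp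
  then have VXY: "verts G = X \<union> Y"
    using card_subset_eq[OF fin] nbh_sub X_def Y_def by (metis Un_least)
  have nX: "nbh G w = Y" if w: "w \<in> X" for w
  proof -
    have wv: "w \<in> verts G" using w VXY by auto
    have "nbh G w \<subseteq> Y"
    proof
      fix z assume z: "z \<in> nbh G w"
      then have "z \<in> verts G" using nbh_sub by blast
      moreover have "z \<notin> X"
      proof
        assume "z \<in> X"
        moreover have "w \<noteq> z" using z adj_irrefl by (auto simp: nbh_def)
        ultimately show False using indep[of w u z] w z X_def by (auto simp: nbh_def)
      qed
      ultimately show "z \<in> Y" using VXY by auto
    qed
    then show ?thesis using card_subset_eq[OF finY] nbh_card[OF wv] cY by simp
  qed
  have nY: "nbh G w = X" if w: "w \<in> Y" for w
  proof -
    have wv: "w \<in> verts G" using w VXY by auto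
    have "nbh G w \<subseteq> X"
    proof
      fix z assume z: "z \<in> nbh G w"
      then have "z \<in> verts G" using nbh_sub by blast
      moreover have "z \<notin> Y"
      proof
        assume "z \<in> Y"
        moreover have "w \<noteq> z" using z adj_irrefl by (auto simp: nbh_def)
        ultimately show False using indep[of w v z] w z Y_def by (auto simp: nbh_def)
      qed
      ultimately show "z \<in> X" using VXY by auto
    qed
    then show ?thesis using card_subset_eq[OF finX] nbh_card[OF wv] cX by simp
  qed
  define K where "K = {{x, y} | x y. x \<in> X \<and> y \<in> Y}"
  define F where "F = {{x, y} | x y. (x,y) \<in> arcs G}"
  have adjK: "{p,q} \<in> K" if "adj G p q" for p q
  proof -
    have pv: "p \<in> verts G" using that st_v by (auto simp: adj_def)
    show ?thesis
    proof (cases "p \<in> X")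
      case True
      then have "q \<in> Y" using nX that by (auto simp: nbh_def)
      then show ?thesis using True K_def by blast
    next
      case False
      then have "p \<in> Y" using pv VXY by auto
      then have "q \<in> X" using nY that by (auto simp: nbh_def)
      then show ?thesis using \<open>p \<in> Y\<close> K_def by (auto simp: insert_commute)
    qed
  qed
  have FK: "F \<subseteq> K" using adjK adj_arc unfolding F_def by blast
  have Fdeg: "card {e\<in>F. w \<in> e} = 2" if w: "w \<in> X \<union> Y" for w
  proof -
    have wv: "w \<in> verts G" using w VXY by auto
    obtain a where a: "(w,a) \<in> arcs G" using out_ex wv by blast
    obtain b where b: "(b,w) \<in> arcs G" using in_ex wv by blast
    have "{e\<in>F. w \<in> e} = {{w,a},{b,w}}"
    proof (rule set_eqI)
      fix e show "e \<in> {e\<in>F. w \<in> e} \<longleftrightarrow> e \<in> {{w,a},{b,w}}"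
      proof
        assume "e \<in> {e\<in>F. w \<in> e}"
        then obtain x y where e: "e = {x,y}" "(x,y) \<in> arcs G" "w \<in> e" unfolding F_def by blast
        then have "w = x \<or> w = y" by auto
        then show "e \<in> {{w,a},{b,w}}"
          using out_unique[OF a, of y] in_unique[OF b, of x] e by auto
      next
        assume "e \<in> {{w,a},{b,w}}"
        then show "e \<in> {e\<in>F. w \<in> e}" using a b unfolding F_def by blast
      qed
    qed
    moreover have "{w,a} \<noteq> {b,w}"
      using no_digon[OF a] b arc_v[OF a] by (auto simp: doubleton_eq_iff)
    ultimately show ?thesis by simp
  qed
  have orient: "\<forall>p q. {p, q} \<in> F \<longrightarrow> ((p, q) \<in> arcs G \<longleftrightarrow> (q, p) \<notin> arcs G)"
  proof (intro allI impI)
    fix p q assume "{p,q} \<in> F"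
    then obtain x y where e: "{p,q} = {x,y}" "(x,y) \<in> arcs G" unfolding F_def by blast
    then have "(p = x \<and> q = y) \<or> (p = y \<and> q = x)" by (auto simp: doubleton_eq_iff)
    then show "(p, q) \<in> arcs G \<longleftrightarrow> (q, p) \<notin> arcs G" using e no_digon by blast
  qed
  have degs: "\<forall>w\<in>X \<union> Y. card {z. (w, z) \<in> arcs G} = 1 \<and> card {z. (z, w) \<in> arcs G} = 1"
    using outc inc VXY by auto
  have edgesK: "edges G = K - F"
  proof (rule set_eqI)
    fix e show "e \<in> edges G \<longleftrightarrow> e \<in> K - F"
    proof
      assume e: "e \<in> edges G"
      then obtain p q where pq: "p \<noteq> q" "e = {p,q}" using mg unfolding mixed_graph_def by blast
      then have "adj G p q" using e by (auto simp: adj_def st_def)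
      then have "e \<in> K" using adjK pq by simp
      moreover have "e \<notin> F" using e arc_ne unfolding F_def by blast
      ultimately show "e \<in> K - F" by simp
    next
      assume "e \<in> K - F"
      then obtain x y where e: "e = {x,y}" "x \<in> X" "y \<in> Y" "e \<notin> F" unfolding K_def by blast
      then have "adj G x y" using nX by (auto simp: nbh_def)
      then have "{x,y} \<in> edges G \<or> (x,y) \<in> arcs G \<or> (y,x) \<in> arcs G" by (auto simp: adj_def st_def insert_commute)
      moreover have "(x,y) \<notin> arcs G" using e unfolding F_def by blast
      moreover have "(y,x) \<notin> arcs G" using e unfolding F_def by (auto simp: insert_commute)
      ultimately show "e \<in> edges G" using e by simp
    qed
  qed
  have arcsF: "arcs G \<subseteq> {(p, q). {p, q} \<in> F}" unfolding F_def by blast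
  have FK': "F \<subseteq> {{x, y} | x y. x \<in> X \<and> y \<in> Y}" using FK K_def by simp
  have edgesK': "edges G = {{x, y} | x y. x \<in> X \<and> y \<in> Y} - F" using edgesK K_def by simp
  have Fdeg': "\<forall>w\<in>X \<union> Y. card {e\<in>F. w \<in> e} = 2" using Fdeg by blast
  show ?thesis unfolding from_Knn_2factor_def
    apply (rule exI[of _ X], rule exI[of _ Y], rule exI[of _ F])
    apply (intro conjI)
    using VXY disj finX finY cX cY FK' Fdeg' arcsF orient degs edgesK' by (simp_all only:)
qed

end

lemma deg_helper:
  assumes "finite B" "card B = n" "Fv \<subseteq> (\<lambda>y. {v,y}) ` B" "card Fv = 2"
  shows "card ((\<lambda>y. {v,y}) ` B - Fv) = n - 2"
proof -
  have "inj_on (\<lambda>y. {v,y}) B" by (auto simp: inj_on_def doubleton_eq_iff)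
  then have "card ((\<lambda>y. {v,y}) ` B) = n" using assms card_image by metis
  then show ?thesis using assms card_Diff_subset[OF finite_subset[OF assms(3)] assms(3)] by simp
qed

locale knn =
  fixes H :: "'a mixgraph" and n :: nat and X Y :: "'a set" and F :: "'a set set"
  assumes VXY: "verts H = X \<union> Y" and disj: "X \<inter> Y = {}" and finX: "finite X" and finY: "finite Y"
    and cX: "card X = n" and cY: "card Y = n"
    and FK: "F \<subseteq> {{x, y} | x y. x \<in> X \<and> y \<in> Y}"
    and Fdeg: "\<forall>v\<in>X \<union> Y. card {e\<in>F. v \<in> e} = 2"
    and arcsF: "arcs H \<subseteq> {(u, v). {u, v} \<in> F}"
    and orient: "\<forall>u v. {u, v} \<in> F \<longrightarrow> ((u, v) \<in> arcs H \<longleftrightarrow> (v, u) \<notin> arcs H)"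
    and degs: "\<forall>v\<in>X \<union> Y. card {w. (v, w) \<in> arcs H} = 1 \<and> card {w. (w, v) \<in> arcs H} = 1"
    and edgesK: "edges H = {{x, y} | x y. x \<in> X \<and> y \<in> Y} - F"
begin

lemma pair_sides: assumes "{p,q} \<in> {{x, y} | x y. x \<in> X \<and> y \<in> Y}"
  shows "(p \<in> X \<and> q \<in> Y) \<or> (p \<in> Y \<and> q \<in> X)"
proof -
  obtain x y where "{p,q} = {x,y}" "x \<in> X" "y \<in> Y" using assms by blast
  then show ?thesis by (auto simp: doubleton_eq_iff)
qed

lemma arc_sides: assumes "(p,q) \<in> arcs H" shows "(p \<in> X \<and> q \<in> Y) \<or> (p \<in> Y \<and> q \<in> X)"
proof -
  have "{p,q} \<in> F" using arcsF assms by auto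
  then have "{p,q} \<in> {{x, y} | x y. x \<in> X \<and> y \<in> Y}" using FK by (rule subsetD[rotated])
  then show ?thesis by (rule pair_sides)
qed

lemma edge_sides: assumes "{p,q} \<in> edges H" shows "(p \<in> X \<and> q \<in> Y) \<or> (p \<in> Y \<and> q \<in> X)"
proof -
  have "{p,q} \<in> {{x, y} | x y. x \<in> X \<and> y \<in> Y}" using assms edgesK by simp
  then show ?thesis by (rule pair_sides)
qed

lemma card_verts: "card (verts H) = 2 * n"
  using VXY card_Un_disjoint[OF finX finY disj] cX cY by simp

lemma mg: "mixed_graph H"
  unfolding mixed_graph_def
proof (intro conjI)
  show "finite (verts H)" using VXY finX finY by simp
  show "\<forall>e\<in>edges H. \<exists>u v. u \<noteq> v \<and> e = {u, v} \<and> u \<in> verts H \<and> v \<in> verts H"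
  proof
    fix e assume "e \<in> edges H"
    then have "e \<in> {{x, y} | x y. x \<in> X \<and> y \<in> Y}" using edgesK by simp
    then obtain x y where xy: "e = {x,y}" "x \<in> X" "y \<in> Y" by blast
    then have "x \<noteq> y" using disj by blast
    then show "\<exists>u v. u \<noteq> v \<and> e = {u, v} \<and> u \<in> verts H \<and> v \<in> verts H"
      using xy VXY by blast
  qed
  show "\<forall>(u, v)\<in>arcs H. u \<noteq> v \<and> u \<in> verts H \<and> v \<in> verts H"
  proof (clarify)
    fix u v assume "(u,v) \<in> arcs H"
    then have "(u \<in> X \<and> v \<in> Y) \<or> (u \<in> Y \<and> v \<in> X)" by (rule arc_sides)
    then show "u \<noteq> v \<and> u \<in> verts H \<and> v \<in> verts H" using VXY disj by blast
  qed
  show "\<forall>(u, v)\<in>arcs H. {u, v} \<notin> edges H"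
  proof (clarify)
    fix u v assume "(u,v) \<in> arcs H" "{u,v} \<in> edges H"
    then have "{u,v} \<in> F" "{u,v} \<notin> F" using arcsF edgesK by auto
    then show False by simp
  qed
qed

lemma sides: assumes "link_step H p l q" shows "(p \<in> X \<and> q \<in> Y) \<or> (p \<in> Y \<and> q \<in> X)"
proof (cases l)
  case (Inl e)
  then have "{p,q} \<in> edges H" using assms by (auto simp: link_step_def)
  then show ?thesis by (rule edge_sides)
next
  case (Inr e)
  then have "(p,q) \<in> arcs H" using assms by (auto simp: link_step_def)
  then show ?thesis by (rule arc_sides)
qed

lemma no_digon: "(p,q) \<in> arcs H \<Longrightarrow> (q,p) \<notin> arcs H"
  using arcsF orient by blast

lemma dXY: "z \<in> X \<Longrightarrow> z \<in> Y \<Longrightarrow> False" using disj by blast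

lemma arc_not_edge: "(p,q) \<in> arcs H \<Longrightarrow> {p,q} \<notin> edges H"
  using arcsF edgesK by blast

lemma edge_deg_aux:
  assumes vA: "v \<in> A" and vB: "v \<notin> B" and finB: "finite B" and cB: "card B = n"
    and K: "K = {{x, y} | x y. x \<in> A \<and> y \<in> B} \<or> K = {{x, y} | x y. x \<in> B \<and> y \<in> A}"
    and FK': "F \<subseteq> K" and Fd: "card {e\<in>F. v \<in> e} = 2" and AB: "A \<inter> B = {}"
  shows "card ({e\<in>K. v \<in> e} - {e\<in>F. v \<in> e}) = n - 2"
proof -
  have S: "{e\<in>K. v \<in> e} = (\<lambda>y. {v,y}) ` B"
  proof (rule set_eqI)
    fix e show "e \<in> {e\<in>K. v \<in> e} \<longleftrightarrow> e \<in> (\<lambda>y. {v,y}) ` B"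
    proof
      assume "e \<in> {e\<in>K. v \<in> e}"
      then have eK: "e \<in> K" and ve: "v \<in> e" by auto
      from K eK obtain y where "y \<in> B" "e = {v,y}"
      proof (elim disjE)
        assume "K = {{x, y} | x y. x \<in> A \<and> y \<in> B}" "e \<in> K"
        then obtain x y where xy: "e = {x,y}" "x \<in> A" "y \<in> B" by blast
        then have "v = x" using ve vB by auto
        then show ?thesis using that xy by blast
      next
        assume "K = {{x, y} | x y. x \<in> B \<and> y \<in> A}" "e \<in> K"
        then obtain x y where xy: "e = {x,y}" "x \<in> B" "y \<in> A" by blast
        then have "v = y" using ve vB by auto
        then have "e = {v,x}" using xy by (simp add: insert_commute)
        then show ?thesis using that xy by blast
      qed
      then show "e \<in> (\<lambda>y. {v,y}) ` B" by blast
    next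
      assume "e \<in> (\<lambda>y. {v,y}) ` B"
      then obtain y where y: "y \<in> B" "e = {v,y}" by blast
      have "e \<in> K" using K
      proof (elim disjE)
        assume "K = {{x, y} | x y. x \<in> A \<and> y \<in> B}"
        then show "e \<in> K" using y vA by blast
      next
        assume "K = {{x, y} | x y. x \<in> B \<and> y \<in> A}"
        moreover have "e = {y,v}" using y by (simp add: insert_commute)
        ultimately show "e \<in> K" using y vA by blast
      qed
      then show "e \<in> {e\<in>K. v \<in> e}" using y by simp
    qed
  qed
  have sub: "{e\<in>F. v \<in> e} \<subseteq> (\<lambda>y. {v,y}) ` B" using FK' S by blast
  show ?thesis unfolding S using deg_helper[OF finB cB sub Fd] .
qed

lemma edge_deg: assumes "v \<in> verts H" shows "card {e\<in>edges H. v \<in> e} = n - 2"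
proof -
  obtain K where K: "K = {{x, y} | x y. x \<in> X \<and> y \<in> Y}" by blast
  have eK: "edges H = K - F" using edgesK K by simp
  have FK': "F \<subseteq> K" using FK K by simp
  have eq: "{e\<in>edges H. v \<in> e} = {e\<in>K. v \<in> e} - {e\<in>F. v \<in> e}" unfolding eK by blast
  have Fd: "card {e\<in>F. v \<in> e} = 2" using Fdeg assms VXY by blast
  show ?thesis
  proof (cases "v \<in> X")
    case True
    have "v \<notin> Y" using True disj by blast
    then show ?thesis unfolding eq using edge_deg_aux[OF True _ finY cY _ FK' Fd disj] K by blast
  next
    case False
    then have vY: "v \<in> Y" using assms VXY by blast
    have "Y \<inter> X = {}" using disj by blast
    then show ?thesis unfolding eq using edge_deg_aux[OF vY False finX cX _ FK' Fd] K by blast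
  qed
qed

lemma cyc_facts:
  assumes "is_cycle H xs ls" "length ls = k"
  shows "xs ! 0 = xs ! k" "\<And>i. i < k \<Longrightarrow> link_step H (xs ! i) (ls ! i) (xs ! Suc i)"
    "\<And>i j. i < k \<Longrightarrow> j < k \<Longrightarrow> i \<noteq> j \<Longrightarrow> xs ! i \<noteq> xs ! j" "distinct ls"
proof -
  have len: "length xs = Suc k" "k \<ge> 1" using assms by (auto simp: is_cycle_def)
  have "hd xs = last xs" using assms by (simp add: is_cycle_def)
  moreover have "xs \<noteq> []" using len by auto
  ultimately show "xs ! 0 = xs ! k" using len hd_conv_nth[of xs] last_conv_nth[of xs] by simp
  show "\<And>i. i < k \<Longrightarrow> link_step H (xs ! i) (ls ! i) (xs ! Suc i)" using assms by (simp add: is_cycle_def)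
  show "distinct ls" using assms by (simp add: is_cycle_def)
  have d: "distinct (butlast xs)" using assms by (simp add: is_cycle_def)
  show "\<And>i j. i < k \<Longrightarrow> j < k \<Longrightarrow> i \<noteq> j \<Longrightarrow> xs ! i \<noteq> xs ! j"
  proof -
    fix i j assume "i < k" "j < k" "i \<noteq> j"
    then have "butlast xs ! i \<noteq> butlast xs ! j" using d len by (simp add: nth_eq_iff_index_eq)
    then show "xs ! i \<noteq> xs ! j" using \<open>i < k\<close> \<open>j < k\<close> len by (simp add: nth_butlast)
  qed
qed

lemma no_short: assumes "k < 4" shows "\<not> has_cycle_of_length H k"
proof
  assume "has_cycle_of_length H k"
  then obtain xs ls where c: "is_cycle H xs ls" "length ls = k" by (auto simp: has_cycle_of_length_def)
  note f = cyc_facts[OF c]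
  have "k \<ge> 1" using c by (simp add: is_cycle_def)
  then have "k = 1 \<or> k = 2 \<or> k = 3" using assms by auto
  moreover have "k \<noteq> 1"
  proof
    assume k1: "k = 1"
    have "link_step H (xs!0) (ls!0) (xs!1)" using f(2)[of 0] k1 by simp
    then have "(xs!0 \<in> X \<and> xs!1 \<in> Y) \<or> (xs!0 \<in> Y \<and> xs!1 \<in> X)" by (rule sides)
    moreover have "xs!1 = xs!0" using f(1) k1 by simp
    ultimately have "(xs!0 \<in> X \<and> xs!0 \<in> Y) \<or> (xs!0 \<in> Y \<and> xs!0 \<in> X)" by simp
    then show False using dXY by blast
  qed
  moreover have "k \<noteq> 3"
  proof
    assume k3: "k = 3"
    have "link_step H (xs!0) (ls!0) (xs!1)" using f(2)[of 0] k3 by simp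
    then have s0: "(xs!0 \<in> X \<and> xs!1 \<in> Y) \<or> (xs!0 \<in> Y \<and> xs!1 \<in> X)" by (rule sides)
    have "link_step H (xs!1) (ls!1) (xs!2)" using f(2)[of 1] k3 by (simp add: numeral_eq_Suc)
    then have s1: "(xs!1 \<in> X \<and> xs!2 \<in> Y) \<or> (xs!1 \<in> Y \<and> xs!2 \<in> X)" by (rule sides)
    have "link_step H (xs!2) (ls!2) (xs!3)" using f(2)[of 2] k3 by (simp add: numeral_eq_Suc)
    then have s2: "(xs!2 \<in> X \<and> xs!3 \<in> Y) \<or> (xs!2 \<in> Y \<and> xs!3 \<in> X)" by (rule sides)
    have "xs!3 = xs!0" using f(1) k3 by simp
    then have s2': "(xs!2 \<in> X \<and> xs!0 \<in> Y) \<or> (xs!2 \<in> Y \<and> xs!0 \<in> X)" using s2 by simp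
    show False using s0 s1 s2' dXY by blast
  qed
  moreover have "k \<noteq> 2"
  proof
    assume k2: "k = 2"
    have l0: "link_step H (xs!0) (ls!0) (xs!1)" and l1: "link_step H (xs!1) (ls!1) (xs!0)"
      using f(2)[of 0] f(2)[of 1] f(1) k2 by (auto simp: numeral_eq_Suc)
    have ne: "ls ! 0 \<noteq> ls ! 1" using f(4) c k2 by (simp add: nth_eq_iff_index_eq)
    have ane': "{q,p} \<notin> edges H" if "(p,q) \<in> arcs H" for p q
      using arc_not_edge[OF that] by (simp add: insert_commute)
    have sw: "{xs!1, xs!0} = {xs!0, xs!1}" by (rule insert_commute)
    show False
    proof (cases "ls!0")
      case (Inl e0)
      then have e0: "e0 = {xs!0, xs!1}" "e0 \<in> edges H" using l0 by (auto simp: link_step_def)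
      show False
      proof (cases "ls!1")
        case (Inl e1)
        then have "e1 = {xs!1, xs!0}" using l1 by (auto simp: link_step_def)
        then show False using ne Inl \<open>ls!0 = Inl e0\<close> e0 sw by simp
      next
        case (Inr p1)
        then have "(xs!1, xs!0) \<in> arcs H" using l1 by (auto simp: link_step_def)
        then show False using ane' e0 by blast
      qed
    next
      case (Inr p0)
      then have p0: "(xs!0, xs!1) \<in> arcs H" using l0 by (auto simp: link_step_def)
      show False
      proof (cases "ls!1")
        case (Inl e1)
        then have "{xs!1, xs!0} \<in> edges H" using l1 by (auto simp: link_step_def)
        then show False using ane' p0 by blast
      next
        case (Inr p1)
        then have "(xs!1, xs!0) \<in> arcs H" using l1 by (auto simp: link_step_def)
        then show False using no_digon p0 by blast
      qed
    qed
  qed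
  ultimately show False by blast
qed


lemma out_unique: assumes "(u,a) \<in> arcs H" "(u,b) \<in> arcs H" shows "a = b"
proof -
  have "u \<in> X \<union> Y" using arc_sides assms(1) by blast
  then have "card {w. (u, w) \<in> arcs H} = 1" using degs by blast
  then obtain x where "{w. (u, w) \<in> arcs H} = {x}" by (auto simp: card_1_singleton_iff)
  then show ?thesis using assms by (simp add: set_eq_iff)
qed

lemma has4: assumes "n \<ge> 3" shows "has_cycle_of_length H 4"
proof -
  have "X \<noteq> {}" using cX assms by auto
  then obtain x where x: "x \<in> X" by blast
  have "card {w. (x, w) \<in> arcs H} = 1" "card {w. (w, x) \<in> arcs H} = 1" using degs x by auto
  then obtain y y0 where "{w. (x, w) \<in> arcs H} = {y}" "{w. (w, x) \<in> arcs H} = {y0}"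
    by (auto simp: card_1_singleton_iff)
  then have a1: "(x,y) \<in> arcs H" and a2: "(y0,x) \<in> arcs H" by auto
  have y: "y \<in> Y" using arc_sides[OF a1] x disj by blast
  have y0: "y0 \<in> Y" using arc_sides[OF a2] x disj by blast
  have yy0: "y \<noteq> y0" using no_digon[OF a1] a2 by blast
  have "card {e\<in>edges H. y \<in> e} = n - 2" using edge_deg y VXY by blast
  then have "card {e\<in>edges H. y \<in> e} > 0" using assms by simp
  then have "{e\<in>edges H. y \<in> e} \<noteq> {}" by (metis card.empty less_irrefl)
  then obtain e where e: "e \<in> edges H" "y \<in> e" by blast
  have "e \<in> {{x, y} | x y. x \<in> X \<and> y \<in> Y}" "e \<notin> F" using e(1) edgesK by auto
  then obtain p q where pq: "e = {p,q}" "p \<in> X" "q \<in> Y" "e \<notin> F" by blast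
  have "y = p \<or> y = q" using e(2) pq(1) by simp
  then have "q = y" using y pq(2) dXY by metis
  then have e2: "{p,y} \<in> edges H" "{p,y} \<notin> F" using e(1) pq by auto
  have "{x,y} \<in> F" using arcsF a1 by blast
  then have px: "p \<noteq> x" using e2 by blast
  have st3: "st H p y0"
  proof (cases "{p,y0} \<in> F")
    case True
    then have "(p,y0) \<in> arcs H \<or> (y0,p) \<in> arcs H" using orient by blast
    moreover have "(y0,p) \<notin> arcs H" using out_unique[OF a2] px by blast
    ultimately have "(p,y0) \<in> arcs H" by blast
    then show ?thesis using pq(2) y0 disj by (auto simp: st_def)
  next
    case False
    then have "{p,y0} \<in> edges H" using edgesK pq(2) y0 by blast
    then show ?thesis using pq(2) y0 disj by (auto simp: st_def)
  qed
  have st1: "st H x y" using a1 x y disj by (auto simp: st_def)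
  have yp: "y \<noteq> p" using y pq(2) dXY by metis
  have "{y,p} = {p,y}" by (rule insert_commute)
  then have st2: "st H y p" using e2 yp by (simp add: st_def)
  have st4: "st H y0 x" using a2 x y0 disj by (auto simp: st_def)
  have "x \<noteq> y" "x \<noteq> y0" "p \<noteq> y0" using x y y0 pq(2) dXY by metis+
  then have "distinct [x,y,p,y0]" using yy0 px yp by auto
  moreover have "x \<in> verts H" "y \<in> verts H" "p \<in> verts H" "y0 \<in> verts H"
    using x y y0 pq(2) VXY by auto
  ultimately show ?thesis using cyc4[OF st1 st2 st3 st4] by blast
qed

lemma zrg: assumes "n = r + 2" "r \<ge> 1" shows "mixed_zrg H 1 r 4"
proof -
  have "\<forall>v\<in>verts H. card {w. (v, w) \<in> arcs H} = 1 \<and> card {w. (w, v) \<in> arcs H} = 1 \<and>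
     card {e\<in>edges H. v \<in> e} = r"
    using degs VXY edge_deg assms(1) by simp
  moreover have "girth_is H 4" unfolding girth_is_def using has4 no_short assms by simp
  ultimately show ?thesis unfolding mixed_zrg_def using mg by blast
qed

end



definition sc :: "nat \<Rightarrow> nat \<Rightarrow> nat" where "sc m k = (if Suc k = m then 0 else Suc k)"
definition pr :: "nat \<Rightarrow> nat \<Rightarrow> nat" where "pr m k = (if k = 0 then m - 1 else k - 1)"

lemma sc_lt: "k < m \<Longrightarrow> sc m k < m" by (auto simp: sc_def)
lemma pr_lt: "k < m \<Longrightarrow> pr m k < m" by (auto simp: pr_def)
lemma sc_pr: "v < m \<Longrightarrow> sc m (pr m v) = v" by (auto simp: sc_def pr_def)
lemma pr_sc: "k < m \<Longrightarrow> pr m (sc m k) = k" by (auto simp: sc_def pr_def)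
lemma sc_inj: "a < m \<Longrightarrow> b < m \<Longrightarrow> sc m a = sc m b \<Longrightarrow> a = b" by (metis pr_sc)
lemma sc_ne: "m \<ge> 2 \<Longrightarrow> k < m \<Longrightarrow> sc m k \<noteq> k" by (auto simp: sc_def)
lemma sc_sc: "m \<ge> 3 \<Longrightarrow> k < m \<Longrightarrow> sc m (sc m k) \<noteq> k" by (auto simp: sc_def)
lemma sc_even: "even m \<Longrightarrow> k < m \<Longrightarrow> even (sc m k) \<longleftrightarrow> odd k" by (auto simp: sc_def)

definition KX :: "nat \<Rightarrow> nat set" where "KX n = {k. k < 2*n \<and> even k}"
definition KY :: "nat \<Rightarrow> nat set" where "KY n = {k. k < 2*n \<and> odd k}"
definition KF :: "nat \<Rightarrow> nat set set" where "KF n = {{k, sc (2*n) k} | k. k < 2*n}"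
definition G0 :: "nat \<Rightarrow> nat mixgraph" where
  "G0 n = \<lparr>verts = {..<2*n},
           edges = {{x, y} | x y. x \<in> KX n \<and> y \<in> KY n} - KF n,
           arcs = {(k, sc (2*n) k) | k. k < 2*n}\<rparr>"

lemma KX_img: "KX n = (\<lambda>i. 2*i) ` {..<n}"
  by (auto simp: KX_def elim!: evenE)
lemma KY_img: "KY n = (\<lambda>i. 2*i+1) ` {..<n}"
  by (auto simp: KY_def elim!: oddE)

lemma G0_knn: assumes "n \<ge> 3" shows "from_Knn_2factor (G0 n) n"
proof -
  let ?m = "2*n"
  let ?X = "KX n" and ?Y = "KY n" and ?F = "KF n"
  have m: "?m \<ge> 3" "even ?m" using assms by auto
  have V: "verts (G0 n) = ?X \<union> ?Y" by (auto simp: G0_def KX_def KY_def)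
  have D: "?X \<inter> ?Y = {}" by (auto simp: KX_def KY_def)
  have fX: "finite ?X" and fY: "finite ?Y" by (auto simp: KX_def KY_def)
  have cX: "card ?X = n" unfolding KX_img by (subst card_image) (auto simp: inj_on_def)
  have cY: "card ?Y = n" unfolding KY_img by (subst card_image) (auto simp: inj_on_def)
  have FK: "?F \<subseteq> {{x, y} | x y. x \<in> ?X \<and> y \<in> ?Y}"
  proof
    fix e assume "e \<in> ?F"
    then obtain k where k: "k < ?m" "e = {k, sc ?m k}" by (auto simp: KF_def)
    have s: "sc ?m k < ?m" using sc_lt k by blast
    show "e \<in> {{x, y} | x y. x \<in> ?X \<and> y \<in> ?Y}"
    proof (cases "even k")
      case True
      then have "odd (sc ?m k)" using sc_even[OF m(2) k(1)] by simp
      then show ?thesis using True k s by (auto simp: KX_def KY_def)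
    next
      case False
      then have "even (sc ?m k)" using sc_even[OF m(2) k(1)] by simp
      then show ?thesis using False k s by (auto simp: KX_def KY_def insert_commute)
    qed
  qed
  have Fdeg: "\<forall>v\<in>?X \<union> ?Y. card {e\<in>?F. v \<in> e} = 2"
  proof
    fix v assume "v \<in> ?X \<union> ?Y"
    then have v: "v < ?m" by (auto simp: KX_def KY_def)
    have "{e\<in>?F. v \<in> e} = {{v, sc ?m v}, {pr ?m v, v}}"
    proof (rule set_eqI)
      fix e show "e \<in> {e\<in>?F. v \<in> e} \<longleftrightarrow> e \<in> {{v, sc ?m v}, {pr ?m v, v}}"
      proof
        assume "e \<in> {e\<in>?F. v \<in> e}"
        then obtain k where k: "k < ?m" "e = {k, sc ?m k}" "v \<in> e" by (auto simp: KF_def)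
        then have "v = k \<or> v = sc ?m k" by auto
        then show "e \<in> {{v, sc ?m v}, {pr ?m v, v}}"
        proof
          assume "v = k" then show ?thesis using k by simp
        next
          assume "v = sc ?m k"
          then have "k = pr ?m v" using pr_sc k by simp
          then show ?thesis using k \<open>v = sc ?m k\<close> by simp
        qed
      next
        assume "e \<in> {{v, sc ?m v}, {pr ?m v, v}}"
        then show "e \<in> {e\<in>?F. v \<in> e}" using v pr_lt[OF v] sc_pr[OF v] unfolding KF_def by auto
      qed
    qed
    moreover have "sc ?m v \<noteq> pr ?m v"
    proof
      assume "sc ?m v = pr ?m v"
      then have "sc ?m (sc ?m v) = v" using sc_pr[OF v] by simp
      then show False using sc_sc[OF m(1) v] by simp
    qed
    moreover have "sc ?m v \<noteq> v" using sc_ne v m by simp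
    ultimately show "card {e\<in>?F. v \<in> e} = 2" by (auto simp: doubleton_eq_iff)
  qed
  have arcsF: "arcs (G0 n) \<subseteq> {(u, v). {u, v} \<in> ?F}" by (auto simp: G0_def KF_def)
  have orient: "\<forall>u v. {u, v} \<in> ?F \<longrightarrow> ((u, v) \<in> arcs (G0 n) \<longleftrightarrow> (v, u) \<notin> arcs (G0 n))"
  proof (intro allI impI)
    fix u v assume "{u,v} \<in> ?F"
    then obtain k where k: "k < ?m" "{u,v} = {k, sc ?m k}" by (auto simp: KF_def)
    have s: "sc ?m (sc ?m k) \<noteq> k" using sc_sc[OF m(1) k(1)] .
    have s2: "sc ?m k < ?m" using sc_lt k by blast
    from k(2) have "(u = k \<and> v = sc ?m k) \<or> (u = sc ?m k \<and> v = k)" by (auto simp: doubleton_eq_iff)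
    then show "(u, v) \<in> arcs (G0 n) \<longleftrightarrow> (v, u) \<notin> arcs (G0 n)"
      using s s2 k(1) by (auto simp: G0_def)
  qed
  have degs: "\<forall>v\<in>?X \<union> ?Y. card {w. (v, w) \<in> arcs (G0 n)} = 1 \<and> card {w. (w, v) \<in> arcs (G0 n)} = 1"
  proof
    fix v assume "v \<in> ?X \<union> ?Y"
    then have v: "v < ?m" by (auto simp: KX_def KY_def)
    have "{w. (v, w) \<in> arcs (G0 n)} = {sc ?m v}" using v by (auto simp: G0_def)
    moreover have "{w. (w, v) \<in> arcs (G0 n)} = {pr ?m v}"
      using v pr_lt[OF v] sc_pr[OF v] pr_sc by (auto simp: G0_def)
    ultimately show "card {w. (v, w) \<in> arcs (G0 n)} = 1 \<and> card {w. (w, v) \<in> arcs (G0 n)} = 1" by simp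
  qed
  have E: "edges (G0 n) = {{x, y} | x y. x \<in> ?X \<and> y \<in> ?Y} - ?F" by (simp add: G0_def)
  show ?thesis unfolding from_Knn_2factor_def
    apply (rule exI[of _ ?X], rule exI[of _ ?Y], rule exI[of _ ?F])
    apply (intro conjI)
    using V D fX fY cX cY FK Fdeg arcsF orient degs E by (simp_all only:)
qed


lemma knn_ex: "from_Knn_2factor H n \<Longrightarrow> \<exists>X Y F. knn H n X Y F"
  unfolding from_Knn_2factor_def knn_def by (simp only: conj_assoc)

lemma knn_from:
  fixes H :: "'a mixgraph"
  assumes "from_Knn_2factor H (r + 2)" "r \<ge> 1"
  shows "mixed_zrg H 1 r 4 \<and> card (verts H) = 2 * (r + 2)"
proof -
  obtain X Y F where "knn H (r + 2) X Y F" using knn_ex[OF assms(1)] by blast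
  then interpret knn H "r + 2" X Y F .
  show ?thesis using zrg[of r] card_verts assms(2) by simp
qed

lemma lower_bound: "mixed_zrg G 1 r 4 \<Longrightarrow> 2 * (r + 2) \<le> card (verts G)"
  using g4.lower g4.intro by blast

lemma structure_gen: "mixed_zrg G 1 r 4 \<Longrightarrow> card (verts G) = 2 * (r + 2) \<Longrightarrow> from_Knn_2factor G (r + 2)"
  using g4.structure_thm g4.intro by blast

theorem theorem3:
  fixes r :: nat
  assumes "r \<ge> 1"
  shows "(\<exists>G :: nat mixgraph. mixed_cage G 1 r 4) \<and>
         (\<forall>H :: 'a mixgraph. mixed_cage H 1 r 4 \<longrightarrow> card (verts H) = 2 * (r + 2)) \<and>
         (\<forall>H :: 'a mixgraph. mixed_cage H 1 r 4 \<longleftrightarrow> from_Knn_2factor H (r + 2))"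
proof -
  have "from_Knn_2factor (G0 (r + 2)) (r + 2)" using G0_knn[of "r + 2"] assms by simp
  then have G0: "mixed_zrg (G0 (r + 2)) 1 r 4" "card (verts (G0 (r + 2))) = 2 * (r + 2)"
    using knn_from assms by blast+
  have "\<forall>G :: nat mixgraph. mixed_zrg G 1 r 4 \<longrightarrow> card (verts (G0 (r + 2))) \<le> card (verts G)"
  proof (intro allI impI)
    fix G :: "nat mixgraph" assume "mixed_zrg G 1 r 4"
    then have "2 * (r + 2) \<le> card (verts G)" by (rule lower_bound)
    then show "card (verts (G0 (r + 2))) \<le> card (verts G)" using G0(2) by simp
  qed
  then have cage0: "mixed_cage (G0 (r + 2)) 1 r 4"
    unfolding mixed_cage_def using G0(1) by blast
  have c2: "card (verts H) = 2 * (r + 2)" if "mixed_cage H 1 r 4" for H :: "'a mixgraph"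
  proof -
    have "card (verts H) \<le> card (verts (G0 (r + 2)))" using that G0(1) unfolding mixed_cage_def by blast
    then have "card (verts H) \<le> 2 * (r + 2)" using G0(2) by simp
    moreover have "2 * (r + 2) \<le> card (verts H)" using that lower_bound unfolding mixed_cage_def by blast
    ultimately show ?thesis by simp
  qed
  have c3: "mixed_cage H 1 r 4 \<longleftrightarrow> from_Knn_2factor H (r + 2)" for H :: "'a mixgraph"
  proof
    assume "mixed_cage H 1 r 4"
    then show "from_Knn_2factor H (r + 2)" using c2 structure_gen unfolding mixed_cage_def by blast
  next
    assume "from_Knn_2factor H (r + 2)"
    then have "mixed_zrg H 1 r 4" "card (verts H) = 2 * (r + 2)" using knn_from assms by blast+
    moreover have "\<forall>G :: nat mixgraph. mixed_zrg G 1 r 4 \<longrightarrow> card (verts H) \<le> card (verts G)"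
    proof (intro allI impI)
      fix G :: "nat mixgraph" assume "mixed_zrg G 1 r 4"
      then have "2 * (r + 2) \<le> card (verts G)" by (rule lower_bound)
      then show "card (verts H) \<le> card (verts G)" using \<open>card (verts H) = 2 * (r + 2)\<close> by simp
    qed
    ultimately show "mixed_cage H 1 r 4" unfolding mixed_cage_def by blast
  qed
  show ?thesis using cage0 c2 c3 by blast
qed

end
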